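(* Let $T\colon\mathscr C\to\mathscr C$ be a homeomorphism of the Cantor set with exactly one fixed point $x^0$ such that for every $x\ne x^0$ and every $m\in\mathbb N$ the set $\{T^{mk}(x):k\in\mathbb Z\}$ is dense in $\mathscr C$. Let $\mathscr C=A\sqcup B$ be a partition into clopen sets with $x^0\in A$. Let $\hat X=A\times\{0,1\}\sqcup B\times\{0\}$ and define $f\colon\hat X\to\hat X$ by $f(x,i)=(T(x),1)$ if $i=0$ and $T(x)\in A$, and $f(x,i)=(T(x),0)$ otherwise. For $x\in\mathscr C$ let $N(x,B)=\min\{k\in\mathbb N_0: T^{-k}(x)\in B\}$ (with $N(x,B)=\infty$ if no such $k$ exists), let $U=\{x\in\mathscr C: N(x,B)<\infty\}$, and let $X=\overline{\{(x,N(x,B)\bmod 2):x\in U\}}$ (closure in $\hat X$). Then for every $m\in\mathbb N$, $X$ is the least closed subset of $\hat X$ that contains $B\times\{0\}$ and is $f^m$-invariant (i.e. satisfies $f^m(S)\subseteq S$).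
   Context: $\mathscr C$ denotes the Cantor set; $\mathbb N_0=\{0,1,2,\dots\}$. *)

theory Defs
  imports "HOL-Analysis.Analysis"
begin

definition cantor_set :: "real set" where
  "cantor_set = {(\<Sum>n. (if d n then 2 else 0) / 3 ^ Suc n) | d :: nat \<Rightarrow> bool. True}"

definition zpow :: "(real \<Rightarrow> real) \<Rightarrow> (real \<Rightarrow> real) \<Rightarrow> int \<Rightarrow> real \<Rightarrow> real" where
  "zpow T Tinv k = (if 0 \<le> k then T ^^ nat k else Tinv ^^ nat (- k))"

definition Xhat :: "real set \<Rightarrow> real set \<Rightarrow> (real \<times> nat) set" where
  "Xhat A B = A \<times> {0, 1} \<union> B \<times> {0}"

definition fmap :: "(real \<Rightarrow> real) \<Rightarrow> real set \<Rightarrow> real \<times> nat \<Rightarrow> real \<times> nat" where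
  "fmap T A = (\<lambda>(x, i). if i = 0 \<and> T x \<in> A then (T x, 1) else (T x, 0))"

text \<open>U = {x : N(x,B) < infinity}; on U, N(x,B) is the least k with T^{-k} x in B.\<close>
definition Uset :: "(real \<Rightarrow> real) \<Rightarrow> real set \<Rightarrow> real set" where
  "Uset Tinv B = {x \<in> cantor_set. \<exists>k::nat. (Tinv ^^ k) x \<in> B}"

definition NB :: "(real \<Rightarrow> real) \<Rightarrow> real set \<Rightarrow> real \<Rightarrow> nat" where
  "NB Tinv B x = (LEAST k::nat. (Tinv ^^ k) x \<in> B)"

definition Xset :: "(real \<Rightarrow> real) \<Rightarrow> real set \<Rightarrow> real set \<Rightarrow> (real \<times> nat) set" where
  "Xset Tinv A B = (top_of_set (Xhat A B)) closure_of
     {(x, NB Tinv B x mod 2) | x. x \<in> Uset Tinv B}"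

end

theory Submission
  imports Defs
begin

definition cF :: "(nat \<Rightarrow> bool) \<Rightarrow> real" where
  "cF d = (\<Sum>n. (if d n then 2 else 0) / 3 ^ Suc n)"

lemma cantor_range: "cantor_set = range cF"
  unfolding cantor_set_def cF_def by auto

lemma summ3: "summable (\<lambda>n. 2 / (3::real) ^ Suc n)"
proof -
  have "summable (\<lambda>n. (2/3) * (1/3::real) ^ n)"
    by (intro summable_mult summable_geometric) auto
  then show ?thesis by (simp add: power_divide field_simps)
qed

lemma summ_c: "summable (\<lambda>n. (if d n then 2 else 0) / (3::real) ^ Suc n)"
  by (rule summable_comparison_test[OF _ summ3]) auto

lemma compact_cantor: "compact cantor_set"
proof -
  have "compact_space (product_topology (\<lambda>i::nat. (euclidean :: bool topology)) UNIV)"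
    by (subst compact_space_product_topology) (simp add: compact_space_def finite_imp_compact)
  then have "compact (UNIV :: (nat \<Rightarrow> bool) set)"
    by (simp add: euclidean_product_topology compact_space_def)
  moreover have "continuous_on UNIV cF"
  proof -
    have ul: "uniform_limit UNIV (\<lambda>n d. \<Sum>i<n. (if d i then 2 else 0) / (3::real) ^ Suc i) cF sequentially"
      unfolding cF_def
      by (rule Weierstrass_m_test[OF _ summ3]) auto
    have "continuous_on UNIV (\<lambda>d::nat\<Rightarrow>bool. (\<Sum>i<n. (if d i then 2 else 0) / (3::real) ^ Suc i))" for n
    proof (intro continuous_on_sum)
      fix i
      have "continuous_on UNIV ((\<lambda>b::bool. (if b then 2 else 0) / (3::real) ^ Suc i) \<circ> (\<lambda>d. d i))"
        by (rule continuous_on_compose) auto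
      then show "continuous_on UNIV (\<lambda>d::nat\<Rightarrow>bool. (if d i then 2 else 0) / (3::real) ^ Suc i)"
        by (simp add: o_def)
    qed
    then show ?thesis
      by (intro uniform_limit_theorem[OF _ ul]) auto
  qed
  ultimately show ?thesis unfolding cantor_range
    using compact_continuous_image by blast
qed

lemma perfect_cantor:
  assumes "x \<in> cantor_set" "r > 0"
  shows "\<exists>w\<in>cantor_set. w \<noteq> x \<and> dist w x < r"
proof -
  obtain d where x: "x = cF d" using assms cantor_range by auto
  obtain n where n: "(1/3::real) ^ n < r/2"
    using real_arch_pow_inv[of "r/2" "1/3"] assms by auto
  define d' where "d' = d(n := \<not> d n)"
  have "cF d' - cF d = (\<Sum>k. (if d' k then 2 else 0) / (3::real) ^ Suc k - (if d k then 2 else 0) / (3::real) ^ Suc k)"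
    unfolding cF_def by (rule suminf_diff[OF summ_c summ_c])
  also have "(\<lambda>k. (if d' k then 2 else 0) / (3::real) ^ Suc k - (if d k then 2 else 0) / (3::real) ^ Suc k)
      = (\<lambda>k. if k = n then (if d' k then 2 else 0) / (3::real) ^ Suc k - (if d k then 2 else 0) / (3::real) ^ Suc k else 0)"
    by (auto simp: d'_def)
  also have "suminf \<dots> = (if d' n then 2 else 0) / (3::real) ^ Suc n - (if d n then 2 else 0) / (3::real) ^ Suc n"
    by (rule sums_unique[symmetric], rule sums_single)
  finally have eq: "cF d' - cF d = (if d' n then 2 else 0) / (3::real) ^ Suc n - (if d n then 2 else 0) / (3::real) ^ Suc n" .
  have ab: "\<bar>cF d' - cF d\<bar> = 2 / 3 ^ Suc n" unfolding eq by (auto simp: d'_def)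
  have "(2::real) / 3 ^ Suc n < r"
  proof -
    have "(2::real) / 3 ^ Suc n = (2/3) * (1/3)^n" by (simp add: power_divide field_simps)
    also have "\<dots> < r" using n assms(2) zero_le_power[of "1/3::real" n] by linarith
    finally show ?thesis .
  qed
  then show ?thesis using ab x
    by (intro bexI[of _ "cF d'"]) (auto simp: dist_real_def cantor_range)
qed
definition orb :: "('a \<Rightarrow> 'a) \<Rightarrow> ('a \<Rightarrow> 'a) \<Rightarrow> 'a \<Rightarrow> 'a set" where
  "orb g g' x = range (\<lambda>j. (g ^^ j) x) \<union> range (\<lambda>j. (g' ^^ j) x)"

lemma orb_swap: "orb g g' x = orb g' g x"
  unfolding orb_def by auto

lemma funpow_maps: "(\<And>x. x \<in> C \<Longrightarrow> g x \<in> C) \<Longrightarrow> x \<in> C \<Longrightarrow> (g ^^ j) x \<in> C"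
  by (induction j) auto

lemma funpow_cont:
  assumes "continuous_on C g" "\<And>x. x \<in> C \<Longrightarrow> g x \<in> C"
  shows "continuous_on C (g ^^ j)"
proof (induction j)
  case 0 then show ?case by (simp add: continuous_on_id)
next
  case (Suc j)
  have "continuous_on C (g \<circ> (g ^^ j))"
    by (rule continuous_on_compose[OF Suc continuous_on_subset[OF assms(1)]])
       (use funpow_maps[of C g] assms(2) in auto)
  then show ?case by simp
qed

lemma funpow_inv:
  assumes "\<And>x. x \<in> C \<Longrightarrow> g x \<in> C" "\<And>x. x \<in> C \<Longrightarrow> g' (g x) = x" "x \<in> C"
  shows "(g' ^^ j) ((g ^^ j) x) = x"
proof (induction j)
  case 0 then show ?case by simp
next
  case (Suc j)
  have e1: "(g ^^ Suc j) x = g ((g ^^ j) x)" by simp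
  have e2: "(g' ^^ Suc j) y = (g' ^^ j) (g' y)" for y by (simp add: funpow_Suc_right del: funpow.simps)
  have "(g' ^^ Suc j) ((g ^^ Suc j) x) = (g' ^^ j) (g' (g ((g ^^ j) x)))"
    unfolding e1 e2 ..
  also have "\<dots> = (g' ^^ j) ((g ^^ j) x)" using assms funpow_maps[of C g] by simp
  finally show ?case using Suc by simp
qed

lemma funpow_inv2:
  assumes "\<And>x. x \<in> C \<Longrightarrow> g x \<in> C" "\<And>x. x \<in> C \<Longrightarrow> g' (g x) = x" "x \<in> C" "k \<le> j"
  shows "(g' ^^ k) ((g ^^ j) x) = (g ^^ (j - k)) x"
proof -
  have "(g ^^ j) x = (g ^^ k) ((g ^^ (j - k)) x)"
    using assms(4) by (metis funpow_add le_add_diff_inverse o_apply)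
  then show ?thesis using funpow_inv[OF assms(1,2) funpow_maps[of C g, OF assms(1) assms(3)]] by simp
qed

lemma limit_to_fix:
  fixes C K :: "real set" and g g' :: "real \<Rightarrow> real"
  assumes comp: "compact C"
    and gC: "\<And>x. x \<in> C \<Longrightarrow> g x \<in> C" and g'C: "\<And>x. x \<in> C \<Longrightarrow> g' x \<in> C"
    and cg: "continuous_on C g" and cg': "continuous_on C g'"
    and inv: "\<And>x. x \<in> C \<Longrightarrow> g' (g x) = x"
    and dens: "\<And>x. x \<in> C \<Longrightarrow> x \<noteq> x0 \<Longrightarrow> C \<subseteq> closure (orb g g' x)"
    and K: "closed K" "y \<in> C" "y \<notin> K"
    and v: "v \<in> C" "\<And>j. j \<ge> J \<Longrightarrow> (g ^^ j) v \<in> K"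
  shows "(\<lambda>j. (g ^^ j) v) \<longlonglongrightarrow> x0"
proof (rule ccontr)
  assume nt: "\<not> ((\<lambda>j. (g ^^ j) v) \<longlonglongrightarrow> x0)"
  then obtain e where e: "e > 0" "\<not> eventually (\<lambda>j. dist ((g ^^ j) v) x0 < e) sequentially"
    unfolding tendsto_iff by auto
  hence "\<forall>N. \<exists>n\<ge>N. dist ((g ^^ n) v) x0 \<ge> e"
    by (auto simp: eventually_sequentially not_less)
  then obtain \<phi> where \<phi>: "\<And>N. \<phi> N \<ge> N \<and> dist ((g ^^ (\<phi> N)) v) x0 \<ge> e" by metis
  have inC: "\<forall>i. (g ^^ (\<phi> i)) v \<in> C" using funpow_maps[of C g] gC v by auto
  obtain l r where l: "l \<in> C" "strict_mono r" "((\<lambda>i. (g ^^ (\<phi> i)) v) \<circ> r) \<longlonglongrightarrow> l"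
    using compact_imp_seq_compact[OF comp] inC unfolding seq_compact_def by metis
  define \<rho> where "\<rho> = \<phi> \<circ> r"
  have \<rho>ge: "\<rho> i \<ge> i" for i using \<phi> seq_suble[OF l(2), of i] unfolding \<rho>_def by (metis le_trans o_apply)
  have lim: "(\<lambda>i. (g ^^ (\<rho> i)) v) \<longlonglongrightarrow> l" using l(3) by (simp add: \<rho>_def o_def)
  have "e \<le> dist l x0"
    by (rule tendsto_lowerbound[OF tendsto_dist[OF lim tendsto_const]])
       (use \<phi> in \<open>auto simp: \<rho>_def\<close>)
  then have lx0: "l \<noteq> x0" using e by auto
  have evC: "\<forall>\<^sub>F i in sequentially. (g ^^ (\<rho> i)) v \<in> C" using funpow_maps[of C g] gC v by auto
  have fw: "(g ^^ k) l \<in> K" for k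
  proof -
    have t: "(\<lambda>i. (g ^^ k) ((g ^^ (\<rho> i)) v)) \<longlonglongrightarrow> (g ^^ k) l"
      by (rule continuous_on_tendsto_compose[OF funpow_cont[OF cg gC] lim l(1) evC])
    show ?thesis
    proof (rule Lim_in_closed_set[OF K(1) _ sequentially_bot t])
      show "\<forall>\<^sub>F i in sequentially. (g ^^ k) ((g ^^ (\<rho> i)) v) \<in> K"
        unfolding eventually_sequentially
      proof (intro exI[of _ J] allI impI)
        fix i assume "J \<le> i"
        then have "J \<le> k + \<rho> i" using \<rho>ge[of i] by linarith
        then show "(g ^^ k) ((g ^^ (\<rho> i)) v) \<in> K" using v(2)[of "k + \<rho> i"] by (simp add: funpow_add)
      qed
    qed
  qed
  have bw: "(g' ^^ k) l \<in> K" for k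
  proof -
    have t: "(\<lambda>i. (g' ^^ k) ((g ^^ (\<rho> i)) v)) \<longlonglongrightarrow> (g' ^^ k) l"
      by (rule continuous_on_tendsto_compose[OF funpow_cont[OF cg' g'C] lim l(1) evC])
    show ?thesis
    proof (rule Lim_in_closed_set[OF K(1) _ sequentially_bot t])
      show "\<forall>\<^sub>F i in sequentially. (g' ^^ k) ((g ^^ (\<rho> i)) v) \<in> K"
        unfolding eventually_sequentially
      proof (intro exI[of _ "J + k"] allI impI)
        fix i assume "J + k \<le> i"
        then have "k \<le> \<rho> i" "J \<le> \<rho> i - k" using \<rho>ge[of i] by linarith+
        then show "(g' ^^ k) ((g ^^ (\<rho> i)) v) \<in> K" using v funpow_inv2[OF gC inv v(1)] by simp
      qed
    qed
  qed
  have "orb g g' l \<subseteq> K" using fw bw unfolding orb_def by auto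
  then have "closure (orb g g' l) \<subseteq> K" using K(1) by (rule closure_minimal)
  then show False using dens[OF l(1) lx0] K by auto
qed

lemma isolation:
  fixes C :: "real set" and g g' :: "real \<Rightarrow> real"
  assumes perf: "\<And>x r. x \<in> C \<Longrightarrow> r > 0 \<Longrightarrow> \<exists>w\<in>C. w \<noteq> x \<and> dist w x < r"
    and v: "v \<in> C" "v \<noteq> x0" and dens: "C \<subseteq> closure (orb g g' v)"
    and t1: "(\<lambda>j. (g ^^ j) v) \<longlonglongrightarrow> x0" and t2: "(\<lambda>j. (g' ^^ j) v) \<longlonglongrightarrow> x0"
  shows False
proof -
  define \<epsilon> where "\<epsilon> = dist v x0 / 2"
  have \<epsilon>: "\<epsilon> > 0" using v by (simp add: \<epsilon>_def)
  have "eventually (\<lambda>j. dist ((g ^^ j) v) x0 < \<epsilon> \<and> dist ((g' ^^ j) v) x0 < \<epsilon>) sequentially"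
    using t1 t2 \<epsilon> unfolding tendsto_iff by (auto intro: eventually_conj)
  then obtain M where M: "\<And>j. j \<ge> M \<Longrightarrow> dist ((g ^^ j) v) x0 < \<epsilon> \<and> dist ((g' ^^ j) v) x0 < \<epsilon>"
    unfolding eventually_sequentially by auto
  define Q where "Q = (((\<lambda>j. (g ^^ j) v) ` {..<M} \<union> (\<lambda>j. (g' ^^ j) v) ` {..<M}) - {v}) \<union> cball x0 \<epsilon>"
  have cQ: "closed Q" unfolding Q_def by (rule closed_Un[OF finite_imp_closed closed_cball]) auto
  have vQ: "v \<notin> Q" unfolding Q_def using \<epsilon> by (auto simp: \<epsilon>_def dist_commute)
  have "orb g g' v \<subseteq> insert v Q"
  proof
    fix y assume "y \<in> orb g g' v"
    then obtain j where "y = (g ^^ j) v \<or> y = (g' ^^ j) v" unfolding orb_def by auto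
    then show "y \<in> insert v Q"
      using M[of j] unfolding Q_def by (cases "j < M") (auto simp: dist_commute)
  qed
  then have "closure (orb g g' v) \<subseteq> insert v Q" using cQ by (intro closure_minimal) auto
  then have CQ: "C \<subseteq> insert v Q" using dens by auto
  obtain r where r: "r > 0" "ball v r \<subseteq> - Q"
    using cQ vQ by (metis Compl_iff closed_open open_contains_ball)
  obtain w where "w \<in> C" "w \<noteq> v" "dist w v < r" using perf[OF v(1) r(1)] by auto
  then show False using CQ r by (auto simp: dist_commute)
qed
lemma near:
  fixes C W :: "real set" and h :: "real \<Rightarrow> real"
  assumes ch: "continuous_on C h" and hC: "\<And>x. x \<in> C \<Longrightarrow> h x \<in> C"
    and W: "openin (top_of_set C) W" and z: "z \<in> C" "h z \<in> W"
  shows "\<exists>d>0. \<forall>w\<in>C. dist w z < d \<longrightarrow> h w \<in> W"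
proof -
  obtain e where e: "e > 0" "\<forall>x'\<in>C. dist x' (h z) < e \<longrightarrow> x' \<in> W"
    using W z unfolding openin_euclidean_subtopology_iff by blast
  obtain d where d: "d > 0" "\<forall>x'\<in>C. dist x' z < d \<longrightarrow> dist (h x') (h z) < e"
    using ch z(1) e(1) unfolding continuous_on_iff by blast
  show ?thesis using d e hC by blast
qed

lemma KL_lemma:
  fixes C B :: "real set" and g g' :: "real \<Rightarrow> real"
  assumes comp: "compact C"
    and perf: "\<And>x r. x \<in> C \<Longrightarrow> r > 0 \<Longrightarrow> \<exists>w\<in>C. w \<noteq> x \<and> dist w x < r"
    and gC: "\<And>x. x \<in> C \<Longrightarrow> g x \<in> C" and g'C: "\<And>x. x \<in> C \<Longrightarrow> g' x \<in> C"
    and cg: "continuous_on C g" and cg': "continuous_on C g'"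
    and ginv: "\<And>x. x \<in> C \<Longrightarrow> g' (g x) = x" and ginv2: "\<And>x. x \<in> C \<Longrightarrow> g (g' x) = x"
    and dens: "\<And>x. x \<in> C \<Longrightarrow> x \<noteq> x0 \<Longrightarrow> C \<subseteq> closure (orb g g' x)"
    and BC: "B \<subseteq> C" and oB: "openin (top_of_set C) B" and Bne: "B \<noteq> {}"
  shows "C \<subseteq> closure {(g ^^ k) b | b k. b \<in> B}"
proof
  define G where "G = {(g ^^ k) b | b k. b \<in> B}"
  fix z assume zC: "z \<in> C"
  show "z \<in> closure {(g ^^ k) b | b k. b \<in> B}"
  proof (rule ccontr)
    assume "z \<notin> closure {(g ^^ k) b | b k. b \<in> B}"
    then have zn: "z \<notin> closure G" unfolding G_def .
    define C' where "C' = closure G"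
    have clC: "closed C" using comp by (rule compact_imp_closed)
    have GC: "G \<subseteq> C" unfolding G_def using funpow_maps[of C g] gC BC by blast
    have C'C: "C' \<subseteq> C" unfolding C'_def using GC clC by (rule closure_minimal)
    have gG: "g ` G \<subseteq> closure G"
    proof
      fix y assume "y \<in> g ` G"
      then obtain b k where "b \<in> B" "y = g ((g ^^ k) b)" unfolding G_def by auto
      then have "y = (g ^^ Suc k) b" by simp
      then have "y \<in> G" using \<open>b \<in> B\<close> unfolding G_def by blast
      then show "y \<in> closure G" using closure_subset by blast
    qed
    have gC': "\<And>x. x \<in> C' \<Longrightarrow> g x \<in> C'"
      using image_closure_subset[OF continuous_on_subset[OF cg] closed_closure gG] C'C
      unfolding C'_def by blast
    obtain v where v: "v \<in> C" "v \<notin> C'" "v \<noteq> x0"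
    proof (cases "z = x0")
      case False then show ?thesis using that zC zn unfolding C'_def by blast
    next
      case True
      have "open (- C')" unfolding C'_def by auto
      then obtain r where r: "r > 0" "ball z r \<subseteq> - C'" using zn unfolding C'_def
        by (meson ComplI open_contains_ball)
      obtain w where "w \<in> C" "w \<noteq> z" "dist w z < r" using perf[OF zC r(1)] by auto
      then have "w \<notin> C'" using r(2) True by (auto simp: dist_commute subset_iff)
      then show ?thesis using that \<open>w \<in> C\<close> \<open>w \<noteq> z\<close> True by blast
    qed
    have bw: "(g' ^^ j) v \<in> C - C'" for j
    proof -
      have inC: "(g' ^^ j) v \<in> C" using funpow_maps[of C g'] g'C v(1) by blast
      moreover have "(g' ^^ j) v \<notin> C'"
      proof
        assume "(g' ^^ j) v \<in> C'"
        then have "(g ^^ j) ((g' ^^ j) v) \<in> C'" using funpow_maps[of C' g] gC' by blast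
        then show False using funpow_inv[of C g' g, OF g'C ginv2 v(1)] v(2) by simp
      qed
      ultimately show ?thesis by auto
    qed
    obtain Bo where Bo: "open Bo" "B = C \<inter> Bo" using oB by (auto simp: openin_open)
    obtain b where b: "b \<in> B" using Bne by auto
    have "b \<in> closure (orb g g' v)" using dens[OF v(1) v(3)] b BC by auto
    then have "Bo \<inter> orb g g' v \<noteq> {}" using open_Int_closure_eq_empty[OF Bo(1)] b Bo(2) by blast
    then obtain ob where o: "ob \<in> Bo" "ob \<in> orb g g' v" by auto
    have oC: "ob \<in> C" using o(2) funpow_maps[of C g] funpow_maps[of C g'] gC g'C v(1)
      unfolding orb_def by blast
    have BC': "B \<subseteq> C'"
    proof
      fix x assume "x \<in> B"
      then have "(g ^^ 0) x \<in> G" unfolding G_def by blast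
      then show "x \<in> C'" unfolding C'_def using closure_subset by auto
    qed
    have oB: "ob \<in> C'" using o(1) oC Bo(2) BC' by auto
    then obtain k where k: "ob = (g ^^ k) v" using o(2) bw unfolding orb_def by auto
    have fw: "(g ^^ j) v \<in> C'" if "k \<le> j" for j
    proof -
      have "(g ^^ j) v = (g ^^ (j - k)) ((g ^^ k) v)"
        using that by (metis funpow_add le_add_diff_inverse2 o_apply)
      then show ?thesis using funpow_maps[of C' g] gC' oB k by metis
    qed
    have t1: "(\<lambda>j. (g ^^ j) v) \<longlonglongrightarrow> x0"
      by (rule limit_to_fix[OF comp gC g'C cg cg' ginv dens _ v(1) v(2) v(1) fw])
         (auto simp: C'_def)
    have dens': "\<And>x. x \<in> C \<Longrightarrow> x \<noteq> x0 \<Longrightarrow> C \<subseteq> closure (orb g' g x)"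
      using dens orb_swap by metis
    have "Bo \<inter> (C - C') = {}" using Bo(2) BC' by auto
    then have "Bo \<inter> closure (C - C') = {}" using open_Int_closure_eq_empty[OF Bo(1)] by blast
    then have bK: "b \<notin> closure (C - C')" using b Bo(2) by auto
    have t2: "(\<lambda>j. (g' ^^ j) v) \<longlonglongrightarrow> x0"
    proof (rule limit_to_fix[OF comp g'C gC cg' cg ginv2 dens' closed_closure _ bK v(1)])
      show "b \<in> C" using b BC by auto
      fix j :: nat assume "0 \<le> j"
      show "(g' ^^ j) v \<in> closure (C - C')" using bw[of j] closure_subset by blast
    qed
    show False by (rule isolation[OF perf v(1) v(3) dens[OF v(1) v(3)] t1 t2])
  qed
qed

lemma cmap_funpow: "continuous_map X X f \<Longrightarrow> continuous_map X X (f ^^ j)"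
  by (induction j) (auto intro: continuous_map_compose)

theorem lemma7p1:
  fixes T Tinv :: "real \<Rightarrow> real" and x0 :: real and A B :: "real set"
  assumes homeo: "homeomorphism cantor_set cantor_set T Tinv"
    and fix0: "x0 \<in> cantor_set" "T x0 = x0"
    and unique_fix: "\<forall>x\<in>cantor_set. T x = x \<longrightarrow> x = x0"
    and dense: "\<forall>x\<in>cantor_set. x \<noteq> x0 \<longrightarrow> (\<forall>m::nat. m \<ge> 1 \<longrightarrow>
        cantor_set \<subseteq> closure {zpow T Tinv (int m * k) x | k :: int. True})"
    and part: "A \<union> B = cantor_set" "A \<inter> B = {}"
    and clopenA: "openin (top_of_set cantor_set) A" "closedin (top_of_set cantor_set) A"
    and clopenB: "openin (top_of_set cantor_set) B" "closedin (top_of_set cantor_set) B"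
    and x0A: "x0 \<in> A"
  shows "\<forall>m::nat. m \<ge> 1 \<longrightarrow>
      (closedin (top_of_set (Xhat A B)) (Xset Tinv A B)
       \<and> B \<times> {0} \<subseteq> Xset Tinv A B
       \<and> (fmap T A ^^ m) ` Xset Tinv A B \<subseteq> Xset Tinv A B
       \<and> (\<forall>S. closedin (top_of_set (Xhat A B)) S \<and> B \<times> {0} \<subseteq> S
              \<and> (fmap T A ^^ m) ` S \<subseteq> S \<longrightarrow> Xset Tinv A B \<subseteq> S))"
proof (intro allI impI)
  fix m :: nat assume m: "m \<ge> 1"
  define C where "C = cantor_set"
  have TC: "\<And>x. x \<in> C \<Longrightarrow> T x \<in> C" and TiC: "\<And>x. x \<in> C \<Longrightarrow> Tinv x \<in> C"
    and inv1: "\<And>x. x \<in> C \<Longrightarrow> Tinv (T x) = x" and inv2: "\<And>x. x \<in> C \<Longrightarrow> T (Tinv x) = x"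
    and cT: "continuous_on C T" and cTi: "continuous_on C Tinv"
    using homeo unfolding homeomorphism_def C_def by auto
  have comp: "compact C" unfolding C_def by (rule compact_cantor)
  have clC: "closed C" using comp by (rule compact_imp_closed)
  have perf: "\<And>x r. x \<in> C \<Longrightarrow> r > 0 \<Longrightarrow> \<exists>w\<in>C. w \<noteq> x \<and> dist w x < r"
    unfolding C_def by (rule perfect_cantor)
  have AC: "A \<subseteq> C" and BC: "B \<subseteq> C" using part unfolding C_def by auto
  define g where "g = T ^^ m"
  define g' where "g' = Tinv ^^ m"
  have gC: "\<And>x. x \<in> C \<Longrightarrow> g x \<in> C" unfolding g_def using funpow_maps[of C T] TC by blast
  have g'C: "\<And>x. x \<in> C \<Longrightarrow> g' x \<in> C" unfolding g'_def using funpow_maps[of C Tinv] TiC by blast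
  have cg: "continuous_on C g" unfolding g_def using funpow_cont[OF cT TC] .
  have cg': "continuous_on C g'" unfolding g'_def using funpow_cont[OF cTi TiC] .
  have ginv: "\<And>x. x \<in> C \<Longrightarrow> g' (g x) = x" unfolding g_def g'_def using funpow_inv[of C T Tinv] TC inv1 by blast
  have ginv2: "\<And>x. x \<in> C \<Longrightarrow> g (g' x) = x" unfolding g_def g'_def using funpow_inv[of C Tinv T] TiC inv2 by blast
  have dens: "C \<subseteq> closure (orb g g' x)" if "x \<in> C" "x \<noteq> x0" for x
  proof -
    have "{zpow T Tinv (int m * k) x | k :: int. True} \<subseteq> orb g g' x"
    proof
      fix y assume "y \<in> {zpow T Tinv (int m * k) x | k :: int. True}"
      then obtain k where y: "y = zpow T Tinv (int m * k) x" by auto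
      show "y \<in> orb g g' x"
      proof (cases "0 \<le> k")
        case True
        have "nat (int m * k) = m * nat k" using True by (simp add: nat_mult_distrib)
        then have "y = (g ^^ nat k) x" using True y unfolding zpow_def g_def
          by (simp add: funpow_mult zero_le_mult_iff)
        then show ?thesis unfolding orb_def by auto
      next
        case False
        have e1: "- (int m * k) = int m * (- k)" by simp
        have "nat (int m * (- k)) = nat (int m) * nat (- k)" by (rule nat_mult_distrib) simp
        then have "nat (- (int m * k)) = m * nat (- k)" unfolding e1 by simp
        moreover have "\<not> 0 \<le> int m * k" using False m by (simp add: zero_le_mult_iff)
        ultimately have "y = (g' ^^ nat (-k)) x" using y unfolding zpow_def g'_def
          by (simp add: funpow_mult)
        then show ?thesis unfolding orb_def by auto
      qed
    qed
    then show ?thesis using dense that m unfolding C_def by (meson closure_mono order_trans)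
  qed
  define U where "U = Uset Tinv B"
  define N where "N = NB Tinv B"
  define P where "P = {(x, NB Tinv B x mod 2) | x. x \<in> Uset Tinv B}"
  have UC: "U \<subseteq> C" unfolding U_def Uset_def C_def by auto
  have Nprop: "(Tinv ^^ N x) x \<in> B \<and> (\<forall>j<N x. (Tinv ^^ j) x \<in> A)" if "x \<in> U" for x
  proof -
    have ex: "\<exists>k. (Tinv ^^ k) x \<in> B" using that unfolding U_def Uset_def by auto
    have 1: "(Tinv ^^ N x) x \<in> B" unfolding N_def NB_def using LeastI_ex[OF ex] .
    have "(Tinv ^^ j) x \<in> A" if "j < N x" for j
    proof -
      have "(Tinv ^^ j) x \<notin> B" using not_less_Least[of j "\<lambda>k. (Tinv ^^ k) x \<in> B"] that
        unfolding N_def NB_def by auto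
      moreover have "(Tinv ^^ j) x \<in> C" using funpow_maps[of C Tinv] TiC UC \<open>x \<in> U\<close> by blast
      ultimately show ?thesis using part unfolding C_def by auto
    qed
    then show ?thesis using 1 by auto
  qed
  have NB0: "b \<in> U \<and> N b = 0" if "b \<in> B" for b
    using that BC unfolding U_def Uset_def N_def NB_def C_def by (auto intro: exI[of _ 0])
  have fstep: "fmap T A (x, N x mod 2) = (T x, N (T x) mod 2) \<and> T x \<in> U" if "x \<in> U" for x
  proof -
    have xC: "x \<in> C" using that UC by auto
    have TxU: "T x \<in> U"
    proof -
      have "(Tinv ^^ Suc (N x)) (T x) \<in> B"
        using Nprop[OF that] inv1[OF xC] by (simp add: funpow_Suc_right del: funpow.simps)
      then show ?thesis using TC[OF xC] unfolding U_def Uset_def C_def by blast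
    qed
    show ?thesis
    proof (cases "T x \<in> B")
      case True
      then have "N (T x) = 0" using NB0 by auto
      moreover have "T x \<notin> A" using True part by auto
      ultimately show ?thesis using TxU by (simp add: fmap_def)
    next
      case False
      then have TA: "T x \<in> A" using TC[OF xC] part unfolding C_def by auto
      have "N (T x) = Suc (LEAST k. (Tinv ^^ Suc k) (T x) \<in> B)"
        unfolding N_def NB_def
        by (rule Least_Suc) (use Nprop[OF TxU] False in \<open>auto simp: N_def\<close>)
      also have "(\<lambda>k. (Tinv ^^ Suc k) (T x) \<in> B) = (\<lambda>k. (Tinv ^^ k) x \<in> B)"
        using inv1[OF xC] by (simp add: funpow_Suc_right del: funpow.simps)
      finally have "N (T x) = Suc (N x)" unfolding N_def NB_def .
      then show ?thesis using TA TxU by (auto simp: fmap_def mod_Suc)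
    qed
  qed
  have fiter: "(fmap T A ^^ j) (x, N x mod 2) = ((T ^^ j) x, N ((T ^^ j) x) mod 2) \<and> (T ^^ j) x \<in> U"
    if "x \<in> U" for x j
  proof (induction j)
    case 0 then show ?case using that by simp
  next
    case (Suc j) then show ?case using fstep[of "(T ^^ j) x"] by simp
  qed
  have PXh: "P \<subseteq> Xhat A B"
  proof
    fix p assume "p \<in> P"
    then obtain x where p: "p = (x, N x mod 2)" "x \<in> U" unfolding P_def N_def U_def by auto
    show "p \<in> Xhat A B"
    proof (cases "x \<in> B")
      case True then show ?thesis using p NB0 by (auto simp: Xhat_def)
    next
      case False then have "x \<in> A" using p UC part unfolding C_def by auto
      then show ?thesis using p by (auto simp: Xhat_def)
    qed
  qed
  have BP: "B \<times> {0} \<subseteq> P" using NB0 unfolding P_def N_def U_def by auto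
  have fP: "(fmap T A ^^ j) ` P \<subseteq> P" for j
    using fiter unfolding P_def N_def U_def by auto
  have cf: "continuous_map (top_of_set (Xhat A B)) (top_of_set (Xhat A B)) (fmap T A)"
  proof -
    define Qa where "Qa = C \<inter> T -` A"
    obtain Ao where Ao: "open Ao" "A = C \<inter> Ao" using clopenA(1) unfolding C_def by (auto simp: openin_open)
    have "Qa = C \<inter> T -` Ao" unfolding Qa_def using Ao TC by auto
    then have oQa: "openin (top_of_set C) Qa" using continuous_openin_preimage_gen[OF cT Ao(1)] by simp
    have "closedin (top_of_set C) Qa" unfolding Qa_def
      by (rule continuous_closedin_preimage_gen[OF cT]) (use TC clopenA(2) C_def in auto)
    then have cQa: "closed Qa" using clC closedin_closed_trans by blast
    have "closedin (top_of_set C) (C - Qa)" using oQa by (simp add: closedin_def Qa_def Diff_Diff_Int)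
    then have cQa': "closed (C - Qa)" using clC closedin_closed_trans by blast
    have cA: "closed A" using clopenA(2) clC closedin_closed_trans C_def by blast
    define S1 where "S1 = Qa \<times> {0::nat}"
    define S2 where "S2 = (C - Qa) \<times> {0::nat} \<union> A \<times> {1}"
    have XS: "Xhat A B = S1 \<union> S2" unfolding S1_def S2_def Xhat_def Qa_def using part C_def by auto
    have c1: "closed S1" unfolding S1_def using cQa by (intro closed_Times) auto
    have c2: "closed S2" unfolding S2_def using cQa' cA by (intro closed_Un closed_Times) auto
    have feq: "fmap T A = (\<lambda>p. if snd p = 0 \<and> T (fst p) \<in> A then (T (fst p), 1) else (T (fst p), 0))"
      by (auto simp: fmap_def fun_eq_iff)
    have cTf: "continuous_on (S1 \<union> S2) (\<lambda>p. T (fst p))"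
      by (rule continuous_on_compose2[OF cT]) (auto intro: continuous_intros simp: S1_def S2_def Qa_def AC[THEN subsetD])
    have "continuous_on (S1 \<union> S2) (fmap T A)"
      unfolding feq
    proof (rule continuous_on_cases_local)
      show "closedin (top_of_set (S1 \<union> S2)) S1" using c1 by (intro closed_subset) auto
      show "closedin (top_of_set (S1 \<union> S2)) S2" using c2 by (intro closed_subset) auto
      show "continuous_on S1 (\<lambda>p. (T (fst p), 1::nat))"
        by (intro continuous_on_Pair continuous_on_const continuous_on_subset[OF cTf]) auto
      show "continuous_on S2 (\<lambda>p. (T (fst p), 0::nat))"
        by (intro continuous_on_Pair continuous_on_const continuous_on_subset[OF cTf]) auto
      fix p assume "p \<in> S1 \<and> \<not> (snd p = 0 \<and> T (fst p) \<in> A) \<or> p \<in> S2 \<and> (snd p = 0 \<and> T (fst p) \<in> A)"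
      then show "(T (fst p), 1::nat) = (T (fst p), 0)"
        by (auto simp: S1_def S2_def Qa_def)
    qed
    moreover have "fmap T A ` Xhat A B \<subseteq> Xhat A B"
    proof
      fix q assume "q \<in> fmap T A ` Xhat A B"
      then obtain x i where xi: "(x, i) \<in> Xhat A B" "q = fmap T A (x, i)" by auto
      then have "x \<in> C" using part unfolding Xhat_def C_def by auto
      then have "T x \<in> A \<or> T x \<in> B" using TC part unfolding C_def by auto
      then show "q \<in> Xhat A B" unfolding xi(2) fmap_def Xhat_def by auto
    qed
    ultimately show ?thesis unfolding XS
      by (simp add: continuous_map_in_subtopology image_subset_iff_funcset)
  qed
  have cfm: "continuous_map (top_of_set (Xhat A B)) (top_of_set (Xhat A B)) (fmap T A ^^ m)"
    by (rule cmap_funpow[OF cf])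
  have Xdef: "Xset Tinv A B = (top_of_set (Xhat A B)) closure_of P" unfolding Xset_def P_def ..
  show "closedin (top_of_set (Xhat A B)) (Xset Tinv A B)
       \<and> B \<times> {0} \<subseteq> Xset Tinv A B
       \<and> (fmap T A ^^ m) ` Xset Tinv A B \<subseteq> Xset Tinv A B
       \<and> (\<forall>S. closedin (top_of_set (Xhat A B)) S \<and> B \<times> {0} \<subseteq> S
              \<and> (fmap T A ^^ m) ` S \<subseteq> S \<longrightarrow> Xset Tinv A B \<subseteq> S)"
  proof (intro conjI allI impI)
    show "closedin (top_of_set (Xhat A B)) (Xset Tinv A B)" unfolding Xdef by simp
    show "B \<times> {0} \<subseteq> Xset Tinv A B" unfolding Xdef
      using closure_of_subset[of P "top_of_set (Xhat A B)"] PXh BP by auto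
    show "(fmap T A ^^ m) ` Xset Tinv A B \<subseteq> Xset Tinv A B" unfolding Xdef
      using continuous_map_image_closure_subset[OF cfm, of P] closure_of_mono[OF fP[of m]]
      by (meson order_trans)
  next
    fix S assume S: "closedin (top_of_set (Xhat A B)) S \<and> B \<times> {0} \<subseteq> S \<and> (fmap T A ^^ m) ` S \<subseteq> S"
    show "Xset Tinv A B \<subseteq> S"
      unfolding Xdef
    proof (rule closure_of_minimal[OF _ conjunct1[OF S]])
      show "P \<subseteq> S"
      proof
        fix p assume "p \<in> P"
        then obtain z where p: "p = (z, N z mod 2)" "z \<in> U" unfolding P_def N_def U_def by auto
        have zC: "z \<in> C" using p UC by auto
        have Bne: "B \<noteq> {}" using Nprop[OF p(2)] by auto
        define G where "G = {(g ^^ k) b | b k. b \<in> B}"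
        have oB: "openin (top_of_set C) B" using clopenB(1) unfolding C_def .
        have KL: "z \<in> closure G" unfolding G_def
          using KL_lemma[OF comp perf gC g'C cg cg' ginv ginv2 dens BC oB Bne] zC by blast
        define n where "n = N z"
        define W where "W j = (if j < n then A else B)" for j
        have "\<forall>j. \<exists>d. j \<le> n \<longrightarrow> d > 0 \<and> (\<forall>w\<in>C. dist w z < d \<longrightarrow> (Tinv ^^ j) w \<in> W j)"
        proof (intro allI)
          fix j show "\<exists>d. j \<le> n \<longrightarrow> d > 0 \<and> (\<forall>w\<in>C. dist w z < d \<longrightarrow> (Tinv ^^ j) w \<in> W j)"
          proof (cases "j \<le> n")
            case True
            have "openin (top_of_set C) (W j)" using clopenA(1) clopenB(1) unfolding W_def C_def by auto
            moreover have "(Tinv ^^ j) z \<in> W j" using Nprop[OF p(2)] True unfolding W_def n_def by auto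
            ultimately show ?thesis
              using near[OF funpow_cont[OF cTi TiC] funpow_maps[of C Tinv, OF TiC] _ zC] by blast
          qed auto
        qed
        then obtain df where df: "\<And>j. j \<le> n \<Longrightarrow> df j > 0 \<and> (\<forall>w\<in>C. dist w z < df j \<longrightarrow> (Tinv ^^ j) w \<in> W j)"
          by metis
        define \<delta> where "\<delta> = Min (df ` {..n})"
        have \<delta>: "\<delta> > 0" unfolding \<delta>_def using df by (subst Min_gr_iff) auto
        have loc: "w \<in> U \<and> N w = n" if "w \<in> C" "dist w z < \<delta>" for w
        proof -
          have "dist w z < df j" if "j \<le> n" for j
            using \<open>dist w z < \<delta>\<close> Min_le[of "df ` {..n}" "df j"] that unfolding \<delta>_def by auto
          then have wj: "(Tinv ^^ j) w \<in> W j" if "j \<le> n" for j using df that \<open>w \<in> C\<close> by blast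
          have wn: "(Tinv ^^ n) w \<in> B" using wj[of n] unfolding W_def by simp
          have "w \<in> U" using wn \<open>w \<in> C\<close> unfolding U_def Uset_def C_def by blast
          moreover have "N w = n" unfolding N_def NB_def
          proof (rule Least_equality)
            show "(Tinv ^^ n) w \<in> B" by (rule wn)
            fix j assume "(Tinv ^^ j) w \<in> B"
            then show "n \<le> j" using wj[of j] part unfolding W_def by (cases "j < n") auto
          qed
          ultimately show ?thesis by auto
        qed
        have GS: "(w, N w mod 2) \<in> S" if "w \<in> G" for w
        proof -
          obtain b k where bk: "b \<in> B" "w = (g ^^ k) b" using \<open>w \<in> G\<close> unfolding G_def by auto
          have bU: "b \<in> U" and Nb: "N b = 0" using NB0[OF bk(1)] by auto
          have w: "w = (T ^^ (m * k)) b" unfolding bk(2) g_def by (simp add: funpow_mult)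
          have "((fmap T A ^^ m) ^^ k) (b, 0) \<in> S" for k
          proof (induction k)
            case 0 then show ?case using S bk(1) by auto
          next
            case (Suc k) then show ?case using S by auto
          qed
          then have "(fmap T A ^^ (m * k)) (b, N b mod 2) \<in> S" using Nb by (simp add: funpow_mult)
          then show ?thesis using fiter[OF bU, of "m * k"] w by simp
        qed
        obtain S0 where S0: "closed S0" "S = Xhat A B \<inter> S0" using conjunct1[OF S] by (auto simp: closedin_closed)
        have "p \<in> S0"
        proof (rule ccontr)
          assume "p \<notin> S0"
          then obtain Ua Ub where U: "open Ua" "open Ub" "p \<in> Ua \<times> Ub" "Ua \<times> Ub \<subseteq> - S0"
            using open_prod_elim[of "- S0" p] S0(1) by blast
          obtain e where e: "e > 0" "ball z e \<subseteq> Ua" using U(1,3) p(1) open_contains_ball by blast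
          obtain w where w: "w \<in> G" "dist w z < min e \<delta>"
            using KL \<delta> e(1) unfolding closure_approachable by (metis min_less_iff_conj)
          have wC: "w \<in> C" using w(1) unfolding G_def using funpow_maps[of C g] gC BC by blast
          have "N w = n" using loc[OF wC] w(2) by auto
          then have "(w, N z mod 2) \<in> S0" using GS[OF w(1)] S0(2) unfolding n_def by auto
          moreover have "w \<in> Ua" using e(2) w(2) by (auto simp: dist_commute subset_iff)
          then have "(w, N z mod 2) \<in> Ua \<times> Ub" using U(3) p(1) by auto
          ultimately show False using U(4) by auto
        qed
        moreover have "p \<in> Xhat A B" using PXh \<open>p \<in> P\<close> by auto
        ultimately show "p \<in> S" using S0(2) by auto
      qed
    qed
  qed
qed

end
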